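(* Let $\mathfrak{g}$ be a nonzero finite-dimensional complex solvable Lie algebra. Then $\mathfrak{g}$ admits a non-trivial CPA-structure.
   Context: A CPA-structure on a Lie algebra $\mathfrak{g}$ is a bilinear product $x\cdot y$ on $\mathfrak{g}$ satisfying, for all $x,y,z$: $x\cdot y=y\cdot x$; $[x,y]\cdot z=x\cdot(y\cdot z)-y\cdot(x\cdot z)$; $x\cdot[y,z]=[x\cdot y,z]+[y,x\cdot z]$. It is non-trivial if $x\cdot y\neq0$ for some $x,y$. *)

theory Defs
  imports Complex_Main
begin

definition lie_algebra :: "(complex \<Rightarrow> 'a::ab_group_add \<Rightarrow> 'a) \<Rightarrow> ('a \<Rightarrow> 'a \<Rightarrow> 'a) \<Rightarrow> bool" where
  "lie_algebra sc br \<longleftrightarrow>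
     vector_space sc \<and>
     (\<forall>x y z. br (x + y) z = br x z + br y z) \<and>
     (\<forall>x y z. br x (y + z) = br x y + br x z) \<and>
     (\<forall>c x y. br (sc c x) y = sc c (br x y)) \<and>
     (\<forall>c x y. br x (sc c y) = sc c (br x y)) \<and>
     (\<forall>x. br x x = 0) \<and>
     (\<forall>x y z. br x (br y z) + br y (br z x) + br z (br x y) = 0)"

definition fin_dim :: "(complex \<Rightarrow> 'a::ab_group_add \<Rightarrow> 'a) \<Rightarrow> bool" where
  "fin_dim sc \<longleftrightarrow> (\<exists>B. finite B \<and> module.span sc B = UNIV)"

fun derived_series :: "(complex \<Rightarrow> 'a::ab_group_add \<Rightarrow> 'a) \<Rightarrow> ('a \<Rightarrow> 'a \<Rightarrow> 'a) \<Rightarrow> nat \<Rightarrow> 'a set" where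
  "derived_series sc br 0 = UNIV"
| "derived_series sc br (Suc n) =
     module.span sc {br x y | x y. x \<in> derived_series sc br n \<and> y \<in> derived_series sc br n}"

definition solvable_lie :: "(complex \<Rightarrow> 'a::ab_group_add \<Rightarrow> 'a) \<Rightarrow> ('a \<Rightarrow> 'a \<Rightarrow> 'a) \<Rightarrow> bool" where
  "solvable_lie sc br \<longleftrightarrow> (\<exists>n. derived_series sc br n = {0})"

definition cpa_structure :: "(complex \<Rightarrow> 'a::ab_group_add \<Rightarrow> 'a) \<Rightarrow> ('a \<Rightarrow> 'a \<Rightarrow> 'a) \<Rightarrow> ('a \<Rightarrow> 'a \<Rightarrow> 'a) \<Rightarrow> bool" where
  "cpa_structure sc br p \<longleftrightarrow>
     (\<forall>x y z. p (x + y) z = p x z + p y z) \<and>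
     (\<forall>x y z. p x (y + z) = p x y + p x z) \<and>
     (\<forall>c x y. p (sc c x) y = sc c (p x y)) \<and>
     (\<forall>c x y. p x (sc c y) = sc c (p x y)) \<and>
     (\<forall>x y. p x y = p y x) \<and>
     (\<forall>x y z. p (br x y) z = p x (p y z) - p y (p x z)) \<and>
     (\<forall>x y z. p x (br y z) = br (p x y) z + br y (p x z))"

end

theory Submission
  imports Defs "HOL-Computational_Algebra.Fundamental_Theorem_Algebra"
begin


locale cla = finite_dimensional_vector_space sc Bas
  for sc :: "complex \<Rightarrow> 'a::ab_group_add \<Rightarrow> 'a" and Bas :: "'a set" +
  fixes br :: "'a \<Rightarrow> 'a \<Rightarrow> 'a"
  assumes br_addL: "br (x + y) z = br x z + br y z"
  and br_addR: "br x (y + z) = br x y + br x z"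
  and br_scL: "br (sc c x) y = sc c (br x y)"
  and br_scR: "br x (sc c y) = sc c (br x y)"
  and br_alt: "br x x = 0"
  and jac: "br x (br y z) + br y (br z x) + br z (br x y) = 0"
begin

lemma br0L[simp]: "br 0 y = 0"
  using br_addL[of 0 0 y] by simp
lemma br0R[simp]: "br x 0 = 0"
  using br_addR[of x 0 0] by simp
lemma br_minusR: "br x (- y) = - br x y"
  using br_addR[of x y "-y"] by (simp add: eq_neg_iff_add_eq_0 add.commute)
lemma br_minusL: "br (- x) y = - br x y"
  using br_addL[of x "-x" y] by (simp add: eq_neg_iff_add_eq_0 add.commute)
lemma br_diffR: "br x (y - z) = br x y - br x z"
  using br_addR[of x y "-z"] by (simp add: br_minusR)
lemma br_diffL: "br (x - y) z = br x z - br y z"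
  using br_addL[of x "-y" z] by (simp add: br_minusL)
lemma br_anti: "br x y = - br y x"
proof -
  have "br x y + br y x = 0"
    using br_addL[of x y "x+y"] br_addR[of x x y] br_addR[of y x y] br_alt[of x] br_alt[of y] br_alt[of "x+y"]
    by simp
  then show ?thesis by (simp add: eq_neg_iff_add_eq_0)
qed
lemma br_sumR: "br x (sum f A) = (\<Sum>i\<in>A. br x (f i))"
  by (induction A rule: infinite_finite_induct) (auto simp: br_addR)
lemma jac2: "br x (br y z) = br (br x y) z + br y (br x z)"
proof -
  have h1: "br y (br z x) = - br y (br x z)" by (simp add: br_anti[of z x] br_minusR)
  have h2: "br z (br x y) = - br (br x y) z" by (simp add: br_anti[of z "br x y"])
  have "br x (br y z) + - br y (br x z) + - br (br x y) z = 0"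
    using jac[of x y z] unfolding h1 h2 .
  then show ?thesis by (simp add: algebra_simps eq_neg_iff_add_eq_0)
qed

lemma br_span: "x \<in> span S \<Longrightarrow> br z x \<in> span (br z ` S)"
proof -
  have "subspace {x. br z x \<in> span (br z ` S)}"
    by (rule subspaceI) (simp_all add: span_zero br_addR br_scR span_add span_scale)
  moreover have "S \<subseteq> {x. br z x \<in> span (br z ` S)}" by (auto intro: span_base)
  ultimately show "x \<in> span S \<Longrightarrow> br z x \<in> span (br z ` S)"
    using span_minimal by blast
qed

lemma br_subspace: "subspace W \<Longrightarrow> (\<And>w. w \<in> S \<Longrightarrow> br z w \<in> W) \<Longrightarrow> x \<in> span S \<Longrightarrow> br z x \<in> W"
  using br_span[of x S z] span_minimal[of "br z ` S" W] by auto

definition kry :: "'a \<Rightarrow> 'a \<Rightarrow> nat \<Rightarrow> 'a" where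
  "kry z w i = (br z ^^ i) w"

lemma kry_0[simp]: "kry z w 0 = w" and kry_Suc: "kry z w (Suc i) = br z (kry z w i)"
  by (simp_all add: kry_def)

lemma kry_indep:
  assumes "\<And>i. i < k \<Longrightarrow> kry z w i \<notin> span (kry z w ` {..<i})"
  shows "independent (kry z w ` {..<k}) \<and> inj_on (kry z w) {..<k}"
  using assms
proof (induction k)
  case 0 then show ?case by (simp add: independent_empty)
next
  case (Suc k)
  have IH: "independent (kry z w ` {..<k}) \<and> inj_on (kry z w) {..<k}"
    using Suc.prems by (intro Suc.IH) simp
  have n: "kry z w k \<notin> span (kry z w ` {..<k})" using Suc.prems[of k] by simp
  then have n2: "kry z w k \<notin> kry z w ` {..<k}" by (rule contrapos_nn) (rule span_base)
  have e: "kry z w ` {..<Suc k} = insert (kry z w k) (kry z w ` {..<k})"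
    by (simp only: lessThan_Suc image_insert)
  have "independent (kry z w ` {..<Suc k})" unfolding e
    using independent_insertI[OF n] IH by blast
  moreover have "inj_on (kry z w) {..<Suc k}" unfolding lessThan_Suc
  proof (rule inj_on_insert[THEN iffD2], rule conjI)
    show "inj_on (kry z w) {..<k}" using IH by blast
    have "{..<k} - {k} = {..<k}" by auto
    then show "kry z w k \<notin> kry z w ` ({..<k} - {k})" using n2 by simp
  qed
  ultimately show ?case ..
qed

lemma kry_exists:
  assumes "w \<noteq> 0"
  obtains m where "0 < m" "independent (kry z w ` {..<m})" "inj_on (kry z w) {..<m}"
    "kry z w m \<in> span (kry z w ` {..<m})"
proof -
  let ?P = "\<lambda>i. kry z w i \<in> span (kry z w ` {..<i})"
  have ex: "\<exists>i. ?P i"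
  proof (rule ccontr)
    assume a: "\<not> (\<exists>i. ?P i)"
    let ?S = "kry z w ` {..<Suc dimension}"
    have h: "independent ?S \<and> inj_on (kry z w) {..<Suc dimension}"
      by (rule kry_indep) (use a in blast)
    have "card ?S \<le> dimension"
      using independent_bound_general[of ?S] dim_subset_UNIV[of ?S] h by linarith
    moreover have "card ?S = Suc dimension" using card_image[OF conjunct2[OF h]] by simp
    ultimately show False by simp
  qed
  define m where "m = (LEAST i. ?P i)"
  have Pm: "?P m" unfolding m_def by (rule LeastI_ex[OF ex])
  have nP: "\<And>i. i < m \<Longrightarrow> \<not> ?P i" unfolding m_def by (rule not_less_Least)
  have "m \<noteq> 0"
  proof
    assume "m = 0"
    then have "w \<in> span {}" using Pm by simp
    then show False using assms by simp
  qed
  moreover have "independent (kry z w ` {..<m}) \<and> inj_on (kry z w) {..<m}"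
    by (rule kry_indep) (use nP in blast)
  ultimately show ?thesis using that Pm by blast
qed

lemma seq_indep:
  fixes u :: "nat \<Rightarrow> 'a"
  assumes ind: "independent (u ` {..<m})" and inj: "inj_on u {..<m}"
    and s: "(\<Sum>i<m. sc (c i) (u i)) = 0" and j: "j < m"
  shows "c j = 0"
proof -
  define g where "g x = c (the_inv_into {..<m} u x)" for x
  have "(\<Sum>x\<in>u ` {..<m}. sc (g x) x) = (\<Sum>i<m. sc (g (u i)) (u i))"
    by (rule sum.reindex[OF inj, unfolded comp_def])
  also have "\<dots> = (\<Sum>i<m. sc (c i) (u i))"
    by (rule sum.cong) (simp_all add: g_def the_inv_into_f_f[OF inj])
  finally have "(\<Sum>x\<in>u ` {..<m}. sc (g x) x) = 0" using s by simp
  moreover have "finite (u ` {..<m})" by simp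
  moreover have "u j \<in> u ` {..<m}" using j by simp
  ultimately have "g (u j) = 0"
    using independentD[OF ind, of "u ` {..<m}" g "u j"] by blast
  then show ?thesis by (simp add: g_def the_inv_into_f_f[OF inj] j)
qed

lemma seq_expand:
  fixes u :: "nat \<Rightarrow> 'a"
  assumes "v \<in> span (u ` {..<m})" and inj: "inj_on u {..<m}"
  obtains c where "v = (\<Sum>i<m. sc (c i) (u i))"
proof -
  have "v \<in> range (\<lambda>r. \<Sum>x\<in>u ` {..<m}. sc (r x) x)"
    using assms(1) unfolding span_finite[OF finite_imageI[OF finite_lessThan]] .
  then obtain r where r: "v = (\<Sum>x\<in>u ` {..<m}. sc (r x) x)" by blast
  have "(\<Sum>x\<in>u ` {..<m}. sc (r x) x) = (\<Sum>i<m. sc (r (u i)) (u i))"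
    by (rule sum.reindex[OF inj, unfolded comp_def])
  then show ?thesis using that[of "\<lambda>i. r (u i)"] r by simp
qed

end

context cla begin

definition opev :: "'a \<Rightarrow> 'a \<Rightarrow> complex poly \<Rightarrow> 'a" where
  "opev z w p = (\<Sum>i\<le>degree p. sc (coeff p i) (kry z w i))"

lemma opev_bound: "degree p < n \<Longrightarrow> opev z w p = (\<Sum>i<n. sc (coeff p i) (kry z w i))"
  unfolding opev_def
  by (rule sum.mono_neutral_right[symmetric]) (auto simp: coeff_eq_0)

lemma opev_add: "opev z w (p + q) = opev z w p + opev z w q"
proof -
  let ?n = "Suc (max (degree p) (degree q))"
  have "degree (p + q) < ?n" using degree_add_le_max[of p q] by simp
  then show ?thesis
    by (simp add: opev_bound[of _ ?n] sum.distrib scale_left_distrib del: sum.lessThan_Suc)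
qed

lemma opev_smult: "opev z w (smult c p) = sc c (opev z w p)"
proof -
  have "degree (smult c p) < Suc (degree p)" by simp
  then show ?thesis
    by (simp add: opev_bound[of _ "Suc (degree p)"] scale_sum_right del: sum.lessThan_Suc)
qed

lemma opev_zero[simp]: "opev z w 0 = 0"
  by (simp add: opev_def)

lemma opev_diff: "opev z w (p - q) = opev z w p - opev z w q"
proof -
  have "opev z w p = opev z w ((p - q) + q)" by simp
  then show ?thesis by (simp only: opev_add) simp
qed

lemma opev_sum: "opev z w (sum f A) = (\<Sum>i\<in>A. opev z w (f i))"
  by (induction A rule: infinite_finite_induct) (simp_all add: opev_add)

lemma opev_monom: "opev z w (monom a n) = sc a (kry z w n)"
proof -
  have "degree (monom a n) < Suc n" by (simp add: degree_monom_eq le_imp_less_Suc degree_monom_le)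
  then have "opev z w (monom a n) = (\<Sum>i<Suc n. sc (coeff (monom a n) i) (kry z w i))"
    by (rule opev_bound)
  also have "\<dots> = sc a (kry z w n)"
    by (simp add: if_distrib sum.delta cong: if_cong)
  finally show ?thesis .
qed

lemma opev_pCons0: "opev z w (pCons 0 p) = br z (opev z w p)"
proof -
  have "degree (pCons 0 p) < Suc (Suc (degree p))" using degree_pCons_le[of 0 p] by simp
  then have "opev z w (pCons 0 p) = (\<Sum>i<Suc (Suc (degree p)). sc (coeff (pCons 0 p) i) (kry z w i))"
    by (rule opev_bound)
  also have "\<dots> = (\<Sum>i<Suc (degree p). sc (coeff p i) (kry z w (Suc i)))"
    by (simp add: sum.lessThan_Suc_shift del: sum.lessThan_Suc)
  also have "\<dots> = br z (\<Sum>i<Suc (degree p). sc (coeff p i) (kry z w i))"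
    by (simp add: br_sumR br_scR kry_Suc del: sum.lessThan_Suc)
  also have "\<dots> = br z (opev z w p)" by (simp add: opev_bound[of _ "Suc (degree p)"])
  finally show ?thesis .
qed

lemma kry_in: "w \<in> W \<Longrightarrow> (\<And>x. x \<in> W \<Longrightarrow> br z x \<in> W) \<Longrightarrow> kry z w i \<in> W"
  by (induction i) (simp_all add: kry_Suc)

lemma eigen:
  assumes W: "subspace W" and inv: "\<And>x. x \<in> W \<Longrightarrow> br z x \<in> W"
    and w: "w \<in> W" "w \<noteq> 0"
  shows "\<exists>v\<in>W. v \<noteq> 0 \<and> (\<exists>a. br z v = sc a v)"
proof -
  obtain m where m0: "0 < m" and ind: "independent (kry z w ` {..<m})"
    and inj: "inj_on (kry z w) {..<m}" and sp: "kry z w m \<in> span (kry z w ` {..<m})"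
    using kry_exists[OF w(2)] by blast
  obtain c where c: "kry z w m = (\<Sum>i<m. sc (c i) (kry z w i))"
    using seq_expand[OF sp inj] by blast
  define q where "q = monom 1 m - (\<Sum>i<m. monom (c i) i)"
  have cq: "coeff q i = (if m = i then 1 else 0) - (\<Sum>j<m. if j = i then c j else 0)" for i
    by (simp add: q_def coeff_sum)
  have cqm: "coeff q m = 1" by (simp add: cq)
  have "degree q \<le> m" by (rule degree_le) (simp add: cq)
  moreover have "m \<le> degree q" using cqm by (intro le_degree) simp
  ultimately have dq: "degree q = m" by simp
  have q0: "q \<noteq> 0" using cqm by auto
  have "opev z w q = 0"
    by (simp add: q_def opev_diff opev_sum opev_monom c)
  have "\<not> constant (poly q)" using dq m0 by (simp add: constant_degree)
  then obtain a where "poly q a = 0" using fundamental_theorem_of_algebra by blast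
  then obtain r where qr: "q = [:-a, 1:] * r" using poly_eq_0_iff_dvd by (blast elim: dvdE)
  have r0: "r \<noteq> 0" using qr q0 by auto
  have dr: "degree q = Suc (degree r)" using degree_mult_eq[of "[:-a,1:]" r] r0 qr by simp
  have e1: "degree [:-a, 1:] = 1" by simp
  have e2: "coeff [:-a, 1:] 1 = 1" by simp
  have "coeff q (1 + degree r) = coeff r (degree r)"
    using coeff_mult_degree_sum[of "[:-a,1:]" r] unfolding e1 e2 qr[symmetric] by simp
  then have lr: "coeff r (degree r) = 1"
    using dr dq cqm by simp
  define v where "v = opev z w r"
  have "v \<in> W" unfolding v_def opev_def
    by (intro subspace_sum[OF W] subspace_scale[OF W] kry_in[OF w(1)] inv)
  moreover have "v \<noteq> 0"
  proof
    assume "v = 0"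
    then have "(\<Sum>i<m. sc (coeff r i) (kry z w i)) = 0"
      using opev_bound[of r m z w] dr dq by (simp add: v_def)
    then have "coeff r (degree r) = 0"
      by (rule seq_indep[OF ind inj]) (use dr dq in simp)
    then show False using lr by simp
  qed
  moreover have "br z v = sc a v"
  proof -
    have "q = pCons 0 r - smult a r" using qr by simp
    then have "0 = br z v - sc a v"
      using \<open>opev z w q = 0\<close> by (simp add: opev_diff opev_smult opev_pCons0 v_def)
    then show ?thesis by simp
  qed
  ultimately show ?thesis by blast
qed

end

context cla begin

lemma weight_claim:
  assumes zK: "\<And>k. k \<in> K \<Longrightarrow> br k z \<in> K"
    and wt: "\<And>k. k \<in> K \<Longrightarrow> br k w = sc (lam k) w"
  shows "\<forall>k\<in>K. br k (kry z w i) - sc (lam k) (kry z w i) \<in> span (kry z w ` {..<i})"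
proof (induction i)
  case 0 then show ?case using wt by simp
next
  case (Suc i)
  let ?u = "kry z w"
  have sub: "span (?u ` {..<i}) \<subseteq> span (?u ` {..<Suc i})" by (intro span_mono) auto
  have ui: "?u i \<in> span (?u ` {..<Suc i})" by (intro span_base) auto
  show ?case
  proof
    fix k assume k: "k \<in> K"
    define r1 where "r1 = br (br k z) (?u i) - sc (lam (br k z)) (?u i)"
    define r2 where "r2 = br k (?u i) - sc (lam k) (?u i)"
    have r1: "r1 \<in> span (?u ` {..<i})" using Suc zK[OF k] unfolding r1_def by blast
    have r2: "r2 \<in> span (?u ` {..<i})" using Suc k unfolding r2_def by blast
    have "br z r2 \<in> span (br z ` ?u ` {..<i})" by (rule br_span[OF r2])
    moreover have "br z ` ?u ` {..<i} \<subseteq> ?u ` {..<Suc i}"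
      by (auto simp: kry_Suc[symmetric])
    ultimately have bz: "br z r2 \<in> span (?u ` {..<Suc i})" using span_mono by blast
    have "br k (?u (Suc i)) = br (br k z) (?u i) + br z (br k (?u i))"
      unfolding kry_Suc by (rule jac2)
    also have "\<dots> = (r1 + sc (lam (br k z)) (?u i)) + br z (r2 + sc (lam k) (?u i))"
      by (simp add: r1_def r2_def)
    also have "\<dots> = (r1 + sc (lam (br k z)) (?u i) + br z r2) + sc (lam k) (?u (Suc i))"
      by (simp add: br_addR br_scR kry_Suc algebra_simps)
    finally have "br k (?u (Suc i)) - sc (lam k) (?u (Suc i)) = r1 + sc (lam (br k z)) (?u i) + br z r2"
      by simp
    also have "\<dots> \<in> span (?u ` {..<Suc i})"
      using r1 sub ui bz by (intro span_add span_scale) auto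
    finally show "br k (?u (Suc i)) - sc (lam k) (?u (Suc i)) \<in> span (?u ` {..<Suc i})" .
  qed
qed

lemma rep_expand:
  fixes u :: "nat \<Rightarrow> 'a"
  assumes ind: "independent (u ` {..<m})" and inj: "inj_on u {..<m}"
    and v: "v \<in> span (u ` {..<m})"
  shows "v = (\<Sum>j<m. sc (representation (u ` {..<m}) v (u j)) (u j))"
proof -
  have "v = (\<Sum>b\<in>u ` {..<m}. sc (representation (u ` {..<m}) v b) b)"
    by (rule sum_representation_eq[OF ind v, symmetric]) auto
  also have "\<dots> = (\<Sum>j<m. sc (representation (u ` {..<m}) v (u j)) (u j))"
    by (rule sum.reindex[OF inj, unfolded comp_def])
  finally show ?thesis .
qed

lemma trace_comm:
  fixes u :: "nat \<Rightarrow> 'a"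
  assumes ind: "independent (u ` {..<m})" and inj: "inj_on u {..<m}"
    and fa: "\<And>i. i < m \<Longrightarrow> br a (u i) \<in> span (u ` {..<m})"
    and fb: "\<And>i. i < m \<Longrightarrow> br b (u i) \<in> span (u ` {..<m})"
  shows "(\<Sum>i<m. representation (u ` {..<m}) (br a (br b (u i))) (u i)) =
         (\<Sum>i<m. representation (u ` {..<m}) (br b (br a (u i))) (u i))"
proof -
  let ?B = "u ` {..<m}"
  let ?c = "\<lambda>v j. representation ?B v (u j)"
  have key: "?c (br a (br b (u i))) i = (\<Sum>j<m. ?c (br b (u i)) j * ?c (br a (u j)) i)"
    if fa: "\<And>i. i < m \<Longrightarrow> br a (u i) \<in> span ?B" and fb: "\<And>i. i < m \<Longrightarrow> br b (u i) \<in> span ?B"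
      and i: "i < m" for a b i
  proof -
    have e: "br b (u i) = (\<Sum>j<m. sc (?c (br b (u i)) j) (u j))"
      by (rule rep_expand[OF ind inj fb[OF i]])
    have "br a (br b (u i)) = br a (\<Sum>j<m. sc (?c (br b (u i)) j) (u j))"
      by (rule arg_cong[OF e])
    also have "\<dots> = (\<Sum>j<m. sc (?c (br b (u i)) j) (br a (u j)))"
      by (simp only: br_sumR br_scR)
    finally have "br a (br b (u i)) = (\<Sum>j<m. sc (?c (br b (u i)) j) (br a (u j)))" .
    then have "?c (br a (br b (u i))) i = ?c (\<Sum>j<m. sc (?c (br b (u i)) j) (br a (u j))) i"
      by simp
    also have "\<dots> = (\<Sum>j<m. representation ?B (sc (?c (br b (u i)) j) (br a (u j))) (u i))"
      by (subst representation_sum[OF ind]) (auto intro: span_scale fa)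
    also have "\<dots> = (\<Sum>j<m. ?c (br b (u i)) j * ?c (br a (u j)) i)"
      by (rule sum.cong) (simp_all add: representation_scale[OF ind fa])
    finally show ?thesis .
  qed
  have "(\<Sum>i<m. ?c (br a (br b (u i))) i) = (\<Sum>i<m. \<Sum>j<m. ?c (br b (u i)) j * ?c (br a (u j)) i)"
    by (rule sum.cong) (simp_all add: key fa fb)
  also have "\<dots> = (\<Sum>j<m. \<Sum>i<m. ?c (br b (u i)) j * ?c (br a (u j)) i)"
    by (rule sum.swap)
  also have "\<dots> = (\<Sum>j<m. \<Sum>i<m. ?c (br a (u j)) i * ?c (br b (u i)) j)"
    by (simp add: mult.commute)
  also have "\<dots> = (\<Sum>i<m. ?c (br b (br a (u i))) i)"
    by (rule sum.cong) (simp_all add: key fa fb)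
  finally show ?thesis .
qed

end

context cla begin

lemma weight_zero:
  assumes zK: "\<And>k. k \<in> K \<Longrightarrow> br k z \<in> K"
    and wt: "\<And>k. k \<in> K \<Longrightarrow> br k w = sc (lam k) w"
    and w: "w \<noteq> 0" and x: "x \<in> K"
  shows "lam (br x z) = 0"
proof -
  let ?u = "kry z w"
  obtain m where m0: "0 < m" and ind: "independent (?u ` {..<m})"
    and inj: "inj_on ?u {..<m}" and sp: "?u m \<in> span (?u ` {..<m})"
    using kry_exists[OF w] by blast
  let ?B = "?u ` {..<m}"
  let ?c = "\<lambda>v j. representation ?B v (?u j)"
  have cl: "\<forall>k\<in>K. br k (?u i) - sc (lam k) (?u i) \<in> span (?u ` {..<i})" for i
    by (rule weight_claim[OF zK wt])
  have uB: "?u i \<in> span ?B" if "i < m" for i using that by (intro span_base) auto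
  have subB: "span (?u ` {..<i}) \<subseteq> span ?B" if "i \<le> m" for i
    using that by (intro span_mono) auto
  have Kin: "br k (?u i) \<in> span ?B" if "k \<in> K" "i < m" for k i
  proof -
    have "br k (?u i) = (br k (?u i) - sc (lam k) (?u i)) + sc (lam k) (?u i)" by simp
    also have "\<dots> \<in> span ?B"
      using cl[of i] that subB[of i] uB[of i] by (intro span_add span_scale) auto
    finally show ?thesis .
  qed
  have zin: "br z (?u i) \<in> span ?B" if "i < m" for i
  proof (cases "Suc i < m")
    case True then show ?thesis using uB[of "Suc i"] by (simp add: kry_Suc)
  next
    case False then have "Suc i = m" using that by simp
    then have "br z (?u i) = ?u m" using kry_Suc[of z w i] by simp
    then show ?thesis using sp by simp
  qed
  let ?y = "br x z"
  have y: "?y \<in> K" using zK[OF x] .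
  have tr0: "(\<Sum>i<m. ?c (br ?y (?u i)) i) = 0"
  proof -
    have "(\<Sum>i<m. ?c (br ?y (?u i)) i) =
        (\<Sum>i<m. ?c (br x (br z (?u i))) i - ?c (br z (br x (?u i))) i)"
    proof (rule sum.cong)
      fix i assume i: "i \<in> {..<m}"
      have "br ?y (?u i) = br x (br z (?u i)) - br z (br x (?u i))"
        by (simp only: eq_diff_eq jac2[of x z "?u i"])
      moreover have "br x (br z (?u i)) \<in> span ?B"
        using i by (intro br_subspace[OF subspace_span _ zin]) (auto intro: Kin[OF x])
      moreover have "br z (br x (?u i)) \<in> span ?B"
        using i by (intro br_subspace[OF subspace_span _ Kin[OF x]]) (auto intro: zin)
      ultimately show "?c (br ?y (?u i)) i = ?c (br x (br z (?u i))) i - ?c (br z (br x (?u i))) i"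
        by (simp add: representation_diff[OF ind])
    qed simp
    also have "\<dots> = (\<Sum>i<m. ?c (br x (br z (?u i))) i) - (\<Sum>i<m. ?c (br z (br x (?u i))) i)"
      by (rule sum_subtractf)
    also have "\<dots> = 0"
      using trace_comm[OF ind inj, of x z, OF Kin[OF x] zin] by simp
    finally show ?thesis .
  qed
  have diag: "?c (br ?y (?u i)) i = lam ?y" if i: "i < m" for i
  proof -
    define r where "r = br ?y (?u i) - sc (lam ?y) (?u i)"
    have r: "r \<in> span (?u ` {..<i})" using cl[of i] y unfolding r_def by blast
    have "?c r i = representation (?u ` {..<i}) r (?u i)"
      by (subst representation_extend[OF ind r]) (use i in auto)
    also have "\<dots> = 0"
    proof (rule ccontr)
      assume "representation (?u ` {..<i}) r (?u i) \<noteq> 0"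
      then have "?u i \<in> ?u ` {..<i}" by (rule representation_ne_zero)
      then obtain j where "j < i" "?u i = ?u j" by auto
      then have "i = j" using inj_onD[OF inj] i by simp
      then show False using \<open>j < i\<close> by simp
    qed
    finally have cr: "?c r i = 0" .
    have "br ?y (?u i) = r + sc (lam ?y) (?u i)" by (simp add: r_def)
    moreover have "r \<in> span ?B" using r subB[of i] i by auto
    moreover have "sc (lam ?y) (?u i) \<in> span ?B" using uB[OF i] by (rule span_scale)
    ultimately have "?c (br ?y (?u i)) i = ?c r i + ?c (sc (lam ?y) (?u i)) i"
      by (simp add: representation_add[OF ind])
    also have "?c (sc (lam ?y) (?u i)) i = lam ?y * ?c (?u i) i"
      by (simp add: representation_scale[OF ind uB[OF i]])
    finally have "?c (br ?y (?u i)) i = ?c r i + lam ?y * ?c (?u i) i" .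
    also have "\<dots> = lam ?y" using cr representation_basis[OF ind, of "?u i"] i by simp
    finally show ?thesis .
  qed
  have "(\<Sum>i<m. ?c (br ?y (?u i)) i) = of_nat m * lam ?y"
    using diag by simp
  with tr0 m0 show ?thesis by simp
qed

end


fun dser :: "(complex \<Rightarrow> 'a::ab_group_add \<Rightarrow> 'a) \<Rightarrow> ('a \<Rightarrow> 'a \<Rightarrow> 'a) \<Rightarrow> 'a set \<Rightarrow> nat \<Rightarrow> 'a set" where
  "dser sc br L 0 = L"
| "dser sc br L (Suc n) = module.span sc {br x y | x y. x \<in> dser sc br L n \<and> y \<in> dser sc br L n}"

lemma dser_UNIV: "derived_series sc br n = dser sc br UNIV n"
  by (induction n) simp_all

context cla begin

lemma dser_mono: "L \<subseteq> M \<Longrightarrow> dser sc br L n \<subseteq> dser sc br M n"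
proof (induction n)
  case 0 then show ?case by simp
next
  case (Suc n)
  have "{br x y | x y. x \<in> dser sc br L n \<and> y \<in> dser sc br L n} \<subseteq>
        {br x y | x y. x \<in> dser sc br M n \<and> y \<in> dser sc br M n}" using Suc by blast
  then show ?case by (simp add: span_mono)
qed

lemma dser_stuck:
  assumes "span {br x y | x y. x \<in> L \<and> y \<in> L} = L"
  shows "dser sc br L n = L"
  by (induction n) (simp_all add: assms)

lemma lie_thm:
  assumes V: "subspace V" and v: "v1 \<in> V" "v1 \<noteq> 0"
  shows "dim L = n \<Longrightarrow> subspace L \<Longrightarrow> (\<forall>x\<in>L. \<forall>y\<in>L. br x y \<in> L) \<Longrightarrow>
    (\<exists>k. dser sc br L k \<subseteq> {0}) \<Longrightarrow> (\<forall>x\<in>L. \<forall>v\<in>V. br x v \<in> V) \<Longrightarrow>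
    \<exists>v\<in>V. v \<noteq> 0 \<and> (\<exists>lam. \<forall>x\<in>L. br x v = sc (lam x) v)"
proof (induction n arbitrary: L rule: less_induct)
  case (less n L)
  note L = less.prems
  show ?case
  proof (cases "L \<subseteq> {0}")
    case True
    then have "\<forall>x\<in>L. br x v1 = sc ((\<lambda>_. 0) x) v1" by auto
    then show ?thesis using v by (intro bexI[of _ v1] conjI exI[of _ "\<lambda>_. 0"])
  next
    case False
    then obtain x0 where x0: "x0 \<in> L" "x0 \<noteq> 0" by blast
    define D where "D = span {br x y | x y. x \<in> L \<and> y \<in> L}"
    have DL: "D \<subseteq> L" unfolding D_def using L(2,3) by (intro span_minimal) auto
    have "D \<noteq> L"
    proof
      assume "D = L"
      then have "dser sc br L k = L" for k by (intro dser_stuck) (simp add: D_def)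
      then obtain k where "L \<subseteq> {0}" using L(4) by metis
      then show False using x0 by blast
    qed
    then obtain z where zL: "z \<in> L" and zD: "z \<notin> D" using DL by blast
    obtain BD where BD: "BD \<subseteq> D" "independent BD" "D \<subseteq> span BD"
      using maximal_independent_subset[of D] by blast
    have spBD: "span BD = D"
      using BD span_minimal[of BD D] unfolding D_def by auto
    have zBD: "z \<notin> span BD" using zD spBD by simp
    have "independent (insert z BD)" by (rule independent_insertI[OF zBD BD(2)])
    moreover have "insert z BD \<subseteq> L" using zL BD(1) DL by auto
    ultimately obtain B where B: "insert z BD \<subseteq> B" "B \<subseteq> L" "independent B" "L \<subseteq> span B"
      using maximal_independent_subset_extend[of "insert z BD" L] by blast
    define K where "K = span (B - {z})"
    have Ksub: "subspace K" by (simp add: K_def)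
    have KL: "K \<subseteq> L" unfolding K_def using B(2) L(2) by (intro span_minimal) auto
    have DK: "D \<subseteq> K"
    proof -
      have "BD \<subseteq> B - {z}" using B(1) zBD span_base[of z BD] by auto
      then show ?thesis using BD(3) span_mono unfolding K_def by blast
    qed
    have zK: "z \<notin> K"
    proof
      assume "z \<in> K"
      then have "dependent B" using B(1) unfolding K_def dependent_def by auto
      then show False using B(3) by simp
    qed
    have "span K \<subset> span L"
    proof -
      have "span K = K" using Ksub by simp
      moreover have "span L = L" using L(2) by simp
      ultimately show ?thesis using KL zK zL by blast
    qed
    then have dK: "dim K < n" using dim_psubset L(1) by blast
    have brD: "br x y \<in> D" if "x \<in> L" "y \<in> L" for x y
      unfolding D_def using that by (intro span_base) blast
    have Kbr: "\<forall>x\<in>K. \<forall>y\<in>K. br x y \<in> K" using brD KL DK by blast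
    have Ksolv: "\<exists>k. dser sc br K k \<subseteq> {0}" using L(4) dser_mono[OF KL] by blast
    have KV: "\<forall>x\<in>K. \<forall>v\<in>V. br x v \<in> V" using L(5) KL by blast
    obtain v0 lam where v0: "v0 \<in> V" "v0 \<noteq> 0" and lam: "\<forall>x\<in>K. br x v0 = sc (lam x) v0"
      using less.IH[OF dK refl Ksub Kbr Ksolv KV] by blast
    have kz: "br k z \<in> K" if "k \<in> K" for k using brD[OF _ zL] KL DK that by blast
    have lz: "lam (br k z) = 0" if "k \<in> K" for k
    proof (rule weight_zero[where K=K and z=z, OF kz])
      show "\<And>k. k \<in> K \<Longrightarrow> br k v0 = sc (lam k) v0" using lam by blast
    qed (use v0 that in simp_all)
    define W where "W = {w \<in> V. \<forall>k\<in>K. br k w = sc (lam k) w}"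
    have Wsub: "subspace W"
    proof (rule subspaceI)
      show "0 \<in> W" unfolding W_def using V by (simp add: subspace_0)
      show "x + y \<in> W" if "x \<in> W" "y \<in> W" for x y
      proof -
        have "x + y \<in> V" using that V unfolding W_def by (blast intro: subspace_add)
        moreover have "\<forall>k\<in>K. br k (x + y) = sc (lam k) (x + y)"
          using that unfolding W_def by (simp add: br_addR scale_right_distrib)
        ultimately show ?thesis unfolding W_def by blast
      qed
      show "sc c x \<in> W" if "x \<in> W" for c x
      proof -
        have "sc c x \<in> V" using that V unfolding W_def by (blast intro: subspace_scale)
        moreover have "\<forall>k\<in>K. br k (sc c x) = sc (lam k) (sc c x)"
          using that unfolding W_def by (simp add: br_scR scale_left_commute)
        ultimately show ?thesis unfolding W_def by blast
      qed
    qed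
    have Winv: "br z w \<in> W" if w: "w \<in> W" for w
    proof -
      have "br z w \<in> V" using w L(5) zL unfolding W_def by blast
      moreover have "br k (br z w) = sc (lam k) (br z w)" if k: "k \<in> K" for k
      proof -
        have "br k (br z w) = br (br k z) w + br z (br k w)" by (rule jac2)
        also have "br (br k z) w = 0" using w kz[OF k] lz[OF k] unfolding W_def by simp
        also have "br k w = sc (lam k) w" using w k unfolding W_def by simp
        finally show ?thesis by (simp add: br_scR)
      qed
      ultimately show ?thesis unfolding W_def by blast
    qed
    have "v0 \<in> W" unfolding W_def using v0 lam by blast
    then obtain v a where vW: "v \<in> W" "v \<noteq> 0" and va: "br z v = sc a v"
      using eigen[OF Wsub Winv] v0(2) by blast
    have "\<forall>x\<in>L. \<exists>c. br x v = sc c v"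
    proof
      fix x assume x: "x \<in> L"
      have "insert z (B - {z}) = B" using B(1) by blast
      moreover have "x \<in> span B" using x B(4) by blast
      ultimately have "x \<in> span (insert z (B - {z}))" by simp
      then obtain t where t: "x - sc t z \<in> K" unfolding K_def span_breakdown_eq by blast
      define k where "k = x - sc t z"
      have "x = k + sc t z" by (simp add: k_def)
      then have "br x v = br k v + sc t (br z v)" by (simp add: br_addL br_scL)
      also have "br k v = sc (lam k) v" using vW t unfolding W_def k_def by blast
      finally have "br x v = sc (lam k + t * a) v" by (simp add: va scale_left_distrib)
      then show "\<exists>c. br x v = sc c v" ..
    qed
    then have "\<exists>f. \<forall>x\<in>L. br x v = sc (f x) v" by (rule bchoice)
    then obtain lam' where "\<forall>x\<in>L. br x v = sc (lam' x) v" by (elim exE)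
    then show ?thesis using vW unfolding W_def by (intro bexI[of _ v] conjI exI[of _ lam']) auto
  qed
qed

end

context cla begin

lemma mk_cpa:
  assumes fadd: "\<And>x y. f (x + y) = f x + f y" and fsc: "\<And>a x. f (sc a x) = a * f x"
    and fbr: "\<And>x y. f (br x y) = 0" and x0: "f x0 \<noteq> 0" and c: "c \<noteq> 0"
    and cond: "\<And>y z. sc (f y) (br c z) + sc (f z) (br y c) = 0"
  shows "\<exists>p. cpa_structure sc br p \<and> (\<exists>x y. p x y \<noteq> 0)"
proof -
  define p where "p x y = sc (f x * f y) c" for x y
  have "cpa_structure sc br p"
    unfolding cpa_structure_def
  proof (intro conjI allI)
    fix x y z a
    show "p (x + y) z = p x z + p y z" by (simp add: p_def fadd distrib_right scale_left_distrib)
    show "p x (y + z) = p x y + p x z" by (simp add: p_def fadd distrib_left scale_left_distrib)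
    show "p (sc a x) y = sc a (p x y)" by (simp add: p_def fsc mult.assoc)
    show "p x (sc a y) = sc a (p x y)" by (simp add: p_def fsc mult.left_commute)
    show "p x y = p y x" by (simp add: p_def mult.commute)
    show "p (br x y) z = p x (p y z) - p y (p x z)"
      by (simp add: p_def fsc fbr mult_ac)
    have "br (p x y) z + br y (p x z) = sc (f x) (sc (f y) (br c z) + sc (f z) (br y c))"
      by (simp add: p_def br_scL br_scR scale_right_distrib mult_ac)
    also have "\<dots> = 0" by (simp add: cond)
    finally show "p x (br y z) = br (p x y) z + br y (p x z)" by (simp add: p_def fbr)
  qed
  moreover have "p x0 x0 \<noteq> 0" using x0 c by (simp add: p_def)
  ultimately show ?thesis by blast
qed

lemma final:
  assumes solv: "\<exists>k. derived_series sc br k = {0}" and nz: "\<exists>x::'a. x \<noteq> 0"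
  shows "\<exists>p. cpa_structure sc br p \<and> (\<exists>x y. p x y \<noteq> 0)"
proof -
  obtain v1 :: 'a where v1: "v1 \<noteq> 0" using nz by blast
  have solvU: "\<exists>k. dser sc br UNIV k \<subseteq> {0}" using solv unfolding dser_UNIV by blast
  obtain c where c: "c \<noteq> 0" and "\<exists>lam. \<forall>x\<in>UNIV. br x c = sc (lam x) c"
    using lie_thm[OF subspace_UNIV _ v1 refl subspace_UNIV _ solvU] by blast
  then obtain lam where lam: "\<And>x. br x c = sc (lam x) c" by blast
  have ladd: "lam (x + y) = lam x + lam y" for x y
  proof -
    have "sc (lam (x + y)) c = sc (lam x + lam y) c"
      by (simp add: lam[symmetric] br_addL scale_left_distrib)
    then show ?thesis using c by simp
  qed
  have lsc: "lam (sc a x) = a * lam x" for a x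
  proof -
    have "br (sc a x) c = sc a (br x c)" by (rule br_scL)
    then have "sc (lam (sc a x)) c = sc (a * lam x) c"
      by (simp add: lam)
    then show ?thesis using c by simp
  qed
  have lbr: "lam (br x y) = 0" for x y
  proof -
    have e1: "br x (br y c) = sc (lam y * lam x) c" by (simp only: lam br_scR scale_scale)
    have e2: "br y (br x c) = sc (lam x * lam y) c" by (simp only: lam br_scR scale_scale)
    have "br x (br y c) = br (br x y) c + br y (br x c)" by (rule jac2)
    then have "sc (lam y * lam x) c = sc (lam (br x y)) c + sc (lam x * lam y) c"
      unfolding e1 e2 lam[of "br x y"] .
    then have "sc (lam (br x y)) c = 0" by (simp add: mult.commute)
    then show ?thesis using c by simp
  qed
  show ?thesis
  proof (cases "\<exists>x0. lam x0 \<noteq> 0")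
    case True
    then obtain x0 where x0: "lam x0 \<noteq> 0" by blast
    show ?thesis
    proof (rule mk_cpa[OF ladd lsc lbr x0 c])
      fix y z
      show "sc (lam y) (br c z) + sc (lam z) (br y c) = 0"
      proof -
        have "br c z = - sc (lam z) c" using br_anti[of c z] lam[of z] by simp
        then show ?thesis by (simp add: lam[of y] mult.commute)
      qed
    qed
  next
    case False
    then have cz: "br y c = 0" for y using lam by simp
    have cz2: "br c y = 0" for y using cz[of y] br_anti[of c y] by simp
    define D where "D = span {br x y | x y. x \<in> (UNIV::'a set) \<and> y \<in> UNIV}"
    have "D \<noteq> UNIV"
    proof
      assume "D = UNIV"
      then have "dser sc br UNIV k = UNIV" for k by (intro dser_stuck) (simp add: D_def)
      moreover obtain k where "dser sc br UNIV k \<subseteq> {0}" using solvU by blast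
      ultimately have "c \<in> {0}" by (metis UNIV_I subsetD)
      then show False using c by simp
    qed
    then obtain z where zD: "z \<notin> D" by (meson UNIV_I subset_antisym subsetI)
    obtain BD where BD: "BD \<subseteq> D" "independent BD" "D \<subseteq> span BD"
      using maximal_independent_subset[of D] by blast
    have "subspace D" unfolding D_def by simp
    then have spBD: "span BD = D"
      using BD span_minimal[OF BD(1)] by blast
    have zBD: "z \<notin> span BD" using zD spBD by simp
    have ind: "independent (insert z BD)" by (rule independent_insertI[OF zBD BD(2)])
    obtain B where B: "insert z BD \<subseteq> B" "B \<subseteq> UNIV" "independent B" "UNIV \<subseteq> span B"
      by (rule maximal_independent_subset_extend[OF subset_UNIV ind])
    have inB: "x \<in> span B" for x by (rule subsetD[OF B(4) UNIV_I])
    define f where "f x = representation B x z" for x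
    have fadd: "f (x + y) = f x + f y" for x y
      by (simp add: f_def representation_add[OF B(3) inB inB])
    have fsc: "f (sc a x) = a * f x" for a x
      by (simp add: f_def representation_scale[OF B(3) inB])
    have fbr: "f (br x y) = 0" for x y
    proof -
      have "BD \<subseteq> B - {z}" using B(1) zBD span_base[of z BD] by auto
      moreover have "br x y \<in> span BD" using BD(3) unfolding D_def by (blast intro: span_base)
      ultimately have m: "br x y \<in> span (B - {z})" using span_mono by blast
      have "f (br x y) = representation (B - {z}) (br x y) z"
        unfolding f_def using representation_extend[OF B(3) m] by simp
      also have "\<dots> = 0"
      proof (rule ccontr)
        assume "representation (B - {z}) (br x y) z \<noteq> 0"
        then have "z \<in> B - {z}" by (rule representation_ne_zero)
        then show False by simp
      qed
      finally show ?thesis .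
    qed
    have fz: "f z \<noteq> 0" using representation_basis[OF B(3), of z] B(1) by (simp add: f_def)
    show ?thesis
    proof (rule mk_cpa[OF fadd fsc fbr fz c])
      fix y w
      show "sc (f y) (br c w) + sc (f w) (br y c) = 0" by (simp add: cz cz2)
    qed
  qed
qed

end

theorem corollary3p9:
  fixes sc :: "complex \<Rightarrow> 'a::ab_group_add \<Rightarrow> 'a" and br :: "'a \<Rightarrow> 'a \<Rightarrow> 'a"
  assumes "lie_algebra sc br"
    and "fin_dim sc"
    and "solvable_lie sc br"
    and "\<exists>x::'a. x \<noteq> 0"
  shows "\<exists>p. cpa_structure sc br p \<and> (\<exists>x y. p x y \<noteq> 0)"
proof -
  have vs: "vector_space sc" using assms(1) unfolding lie_algebra_def by blast
  interpret vs: vector_space sc by (rule vs)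
  obtain B0 where B0: "finite B0" "vs.span B0 = UNIV" using assms(2) unfolding fin_dim_def by blast
  obtain Bas where Bas: "Bas \<subseteq> UNIV" "vs.independent Bas" "UNIV \<subseteq> vs.span Bas"
    by (rule vs.maximal_independent_subset)
  have fin: "finite Bas" using vs.independent_span_bound[OF B0(1) Bas(2)] B0(2) by simp
  interpret cla sc Bas br
  proof (unfold_locales)
    show "finite Bas" by (rule fin)
    show "vs.independent Bas" by (rule Bas(2))
    show "vs.span Bas = UNIV" using Bas(3) by blast
  qed (use assms(1) in \<open>simp_all add: lie_algebra_def\<close>)
  show ?thesis
    by (rule final) (use assms(3,4) in \<open>simp_all add: solvable_lie_def\<close>)
qed

end
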